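(* Let $G:\mathbb{R}^{d_x}\to\mathbb{R}$ be $\mu_x$-strongly convex and $L_x$-smooth, $F:\mathbb{R}^{d_y}\to\mathbb{R}\cup\{+\infty\}$ proper closed convex with conjugate $F^\star$, $K:\mathbb{R}^{d_x}\to\mathbb{R}^{d_y}$ linear, and $(x^\star,y^\star)$ a solution of $\min_x\max_y\{G(x)+\langle y,Kx\rangle-F^\star(y)\}$. Consider iterates of APDA with Inexact Prox (with any stepsizes $\eta_x,\eta_y,\beta_y>0$, $\theta\in[0,1]$ and any inner method, $\hat x^k\in\mathbb{R}^{d_x}$ being the point it returns), and let $w^{\star k}$ be the exact minimizer of $\Psi^k$. Then for all $k\ge0$ $(1+\frac{\mu_x\eta_x}{2})\frac1{\eta_x}\|x^{k+1}-x^\star\|^2\le\frac1{\eta_x}\|x^k-x^\star\|^2+(2\eta_x+\mu_x\eta_x^2)\|\nabla\Psi^k(\hat x^k)\|^2-\frac1{2\eta_x}\|x^k-w^{\star k}\|^2-2\langle K^\top\bar y^k-K^\top y^\star,\hat x^k-x^\star\rangle-\frac1{L_x}\|\nabla G(\hat x^k)-\nabla G(x^\star)\|^2.$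
   Context: $\mu_x$-strong convexity: $G(x')-G(x'')-\langle\nabla G(x''),x'-x''\rangle\ge\frac{\mu_x}{2}\|x'-x''\|^2$; $L_x$-smoothness: $\|\nabla G(x')-\nabla G(x'')\|\le L_x\|x'-x''\|$. A solution satisfies $\nabla G(x^\star)+K^\top y^\star=0$ and $0\in\partial F^\star(y^\star)-Kx^\star$. APDA with Inexact Prox: given $(x^0,y^0)$, $\bar y^0=y^0$, stepsizes $\eta_x,\eta_y,\beta_y>0$, $\theta\in[0,1]$, number of inner iterations $T$, inner method $\mathcal M$; for $k=0,1,\dots$: $\Psi^k(x)=G(x)+\frac{1}{2\eta_x}\|x-(x^k-\eta_xK^\top\bar y^k)\|^2$; $\hat x^k$ is the output of $T$ iterations of $\mathcal M$ applied to $\Psi^k$ (an approximate minimizer); $x^{k+1}=x^k-\eta_x(\nabla G(\hat x^k)+K^\top\bar y^k)$; $y^{k+1}=y^k-\eta_y(g^{k+1}-K\hat x^k)-\eta_y\beta_yK(K^\top y^k+\nabla G(\hat x^k))$ with $g^{k+1}\in\partial F^\star(y^{k+1})$; $\bar y^{k+1}=y^{k+1}+\theta(y^{k+1}-y^k)$. *)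

theory Defs
  imports "HOL-Analysis.Analysis"
begin

definition grad :: "('a::euclidean_space \<Rightarrow> real) \<Rightarrow> 'a \<Rightarrow> 'a" where
  "grad f x = (THE g. (f has_derivative (\<lambda>h. g \<bullet> h)) (at x))"

definition strongly_convex_grad :: "real \<Rightarrow> ('a::euclidean_space \<Rightarrow> real) \<Rightarrow> bool" where
  "strongly_convex_grad \<mu> f \<longleftrightarrow>
     (\<forall>x' x''. f x' - f x'' - grad f x'' \<bullet> (x' - x'') \<ge> \<mu> / 2 * (norm (x' - x''))\<^sup>2)"

definition smooth_grad :: "real \<Rightarrow> ('a::euclidean_space \<Rightarrow> real) \<Rightarrow> bool" where
  "smooth_grad L f \<longleftrightarrow> (\<forall>x' x''. norm (grad f x' - grad f x'') \<le> L * norm (x' - x''))"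

definition proper_fun :: "('a \<Rightarrow> ereal) \<Rightarrow> bool" where
  "proper_fun F \<longleftrightarrow> (\<forall>x. F x \<noteq> -\<infinity>) \<and> (\<exists>x. F x \<noteq> \<infinity>)"

definition closed_fun :: "('a::topological_space \<Rightarrow> ereal) \<Rightarrow> bool" where
  "closed_fun F \<longleftrightarrow> closed {(x, t::real). F x \<le> ereal t}"

definition convex_fun :: "('a::real_vector \<Rightarrow> ereal) \<Rightarrow> bool" where
  "convex_fun F \<longleftrightarrow> convex {(x, t::real). F x \<le> ereal t}"

definition conjugate :: "('a::real_inner \<Rightarrow> ereal) \<Rightarrow> 'a \<Rightarrow> ereal" where
  "conjugate F y = (SUP x. ereal (y \<bullet> x) - F x)"

definition subdiff :: "('a::real_inner \<Rightarrow> ereal) \<Rightarrow> 'a \<Rightarrow> 'a set" where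
  "subdiff f y = {g. f y \<noteq> \<infinity> \<and> f y \<noteq> -\<infinity> \<and> (\<forall>z. f z \<ge> f y + ereal (g \<bullet> (z - y)))}"

end

theory Submission
  imports Defs
begin

lemma grad_unique:
  fixes f :: "'a::euclidean_space \<Rightarrow> real"
  assumes "(f has_derivative (\<lambda>h. v \<bullet> h)) (at z)"
  shows "grad f z = v"
  unfolding grad_def
proof (rule the_equality)
  fix g assume "(f has_derivative (\<lambda>h. g \<bullet> h)) (at z)"
  then have "(\<lambda>h. g \<bullet> h) = (\<lambda>h. v \<bullet> h)" using assms by (rule has_derivative_unique)
  then have "g \<bullet> (g - v) = v \<bullet> (g - v)" by metis
  then have "(g - v) \<bullet> (g - v) = 0" by (simp add: inner_diff_left)
  then show "g = v" by simp
qed (rule assms)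

lemma grad_works:
  fixes f :: "'a::euclidean_space \<Rightarrow> real"
  assumes "f differentiable (at z)"
  shows "(f has_derivative (\<lambda>h. grad f z \<bullet> h)) (at z)"
proof -
  obtain D where D: "(f has_derivative D) (at z)" using assms unfolding differentiable_def by blast
  then have lin: "linear D" using has_derivative_linear by blast
  define v where "v = (\<Sum>b\<in>Basis. D b *\<^sub>R b)"
  have "D h = v \<bullet> h" for h
  proof -
    have "D h = D (\<Sum>b\<in>Basis. (h \<bullet> b) *\<^sub>R b)" by (simp add: euclidean_representation)
    also have "\<dots> = (\<Sum>b\<in>Basis. (h \<bullet> b) * D b)"
      using lin by (simp add: linear_sum linear_scale)
    also have "\<dots> = v \<bullet> h" unfolding v_def by (auto simp: inner_sum_left intro!: sum.cong simp del: inner_commute) (simp add: inner_commute)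
    finally show ?thesis .
  qed
  then have "D = (\<lambda>h. v \<bullet> h)" by auto
  with D have "(f has_derivative (\<lambda>h. v \<bullet> h)) (at z)" by simp
  moreover then have "grad f z = v" by (rule grad_unique)
  ultimately show ?thesis by simp
qed

lemma descent:
  fixes G :: "'a::euclidean_space \<Rightarrow> real"
  assumes diff: "\<And>z. G differentiable (at z)" and sm: "smooth_grad L G"
  shows "G z \<le> G y + grad G y \<bullet> (z - y) + L / 2 * (norm (z - y))\<^sup>2"
proof -
  define d where "d = z - y"
  define \<phi> where "\<phi> t = G (y + t *\<^sub>R d) - t * (grad G y \<bullet> d) - L / 2 * t\<^sup>2 * (norm d)\<^sup>2" for t
  define \<phi>' where "\<phi>' t = (\<lambda>s. s * (grad G (y + t *\<^sub>R d) \<bullet> d - grad G y \<bullet> d - L * t * (norm d)\<^sup>2))" for t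
  have der: "(\<phi> has_derivative \<phi>' t) (at t within {0..1})" for t
  proof -
    have g1: "((\<lambda>t. y + t *\<^sub>R d) has_derivative (\<lambda>s. s *\<^sub>R d)) (at t within {0..1})"
      by (auto intro!: derivative_eq_intros)
    have g2: "(G has_derivative (\<lambda>h. grad G (y + t *\<^sub>R d) \<bullet> h)) (at (y + t *\<^sub>R d))"
      using grad_works[OF diff] .
    have c: "((\<lambda>t. G (y + t *\<^sub>R d)) has_derivative (\<lambda>s. grad G (y + t *\<^sub>R d) \<bullet> (s *\<^sub>R d))) (at t within {0..1})"
      using has_derivative_compose[OF g1 g2] by (simp add: o_def)
    show ?thesis unfolding \<phi>_def[abs_def] \<phi>'_def
      by (rule derivative_eq_intros c | simp)+ (auto simp: algebra_simps power2_eq_square)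
  qed
  obtain \<xi> where \<xi>: "\<xi> \<in> {0..1}" "\<phi> 1 - \<phi> 0 = \<phi>' \<xi> (1 - 0)"
    using mvt_very_simple[of 0 1 \<phi> \<phi>'] der by auto
  have "(grad G (y + \<xi> *\<^sub>R d) - grad G y) \<bullet> d \<le> norm (grad G (y + \<xi> *\<^sub>R d) - grad G y) * norm d"
    by (rule norm_cauchy_schwarz)
  also have "\<dots> \<le> L * norm (\<xi> *\<^sub>R d) * norm d"
    using sm unfolding smooth_grad_def
    by (metis add_diff_cancel_left' mult_right_mono norm_ge_zero)
  also have "\<dots> = L * \<xi> * (norm d)\<^sup>2" using \<xi> by (simp add: power2_eq_square)
  finally have "\<phi>' \<xi> 1 \<le> 0" unfolding \<phi>'_def by (simp add: inner_diff_left)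
  with \<xi> have "\<phi> 1 \<le> \<phi> 0" by simp
  then show ?thesis unfolding \<phi>_def d_def by simp
qed

lemma smooth_cvx:
  fixes G :: "'a::euclidean_space \<Rightarrow> real"
  assumes diff: "\<And>z. G differentiable (at z)" and sm: "smooth_grad L G" and Lp: "L > 0"
    and cvx: "\<And>a b. G a - G b - grad G b \<bullet> (a - b) \<ge> 0"
  shows "G y \<ge> G x + grad G x \<bullet> (y - x) + 1 / (2 * L) * (norm (grad G y - grad G x))\<^sup>2"
proof -
  define r where "r = grad G y - grad G x"
  define z where "z = y - (1 / L) *\<^sub>R r"
  have A: "G z \<ge> G x + grad G x \<bullet> (z - x)" using cvx[of z x] by simp
  have B: "G z \<le> G y + grad G y \<bullet> (z - y) + L / 2 * (norm (z - y))\<^sup>2" by (rule descent[OF diff sm])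
  have e1: "grad G x \<bullet> (z - x) = grad G x \<bullet> (y - x) - (1 / L) * (grad G x \<bullet> r)"
    unfolding z_def by (simp add: inner_diff_right algebra_simps)
  have e2: "grad G y \<bullet> (z - y) = - (1 / L) * (grad G y \<bullet> r)"
    unfolding z_def by (simp add: inner_diff_right algebra_simps)
  have e3: "L / 2 * (norm (z - y))\<^sup>2 = 1 / (2 * L) * (r \<bullet> r)"
    unfolding z_def using Lp by (simp add: power2_norm_eq_inner power2_eq_square field_simps flip: power2_eq_square)
  have e4: "grad G y \<bullet> r - grad G x \<bullet> r = r \<bullet> r" unfolding r_def by (simp add: inner_diff_left)
  have "(1 / L) * (grad G y \<bullet> r) - (1 / L) * (grad G x \<bullet> r) = (1 / L) * (r \<bullet> r)"
    using e4 by (metis right_diff_distrib)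
  moreover have "(1 / L) * (r \<bullet> r) - 1 / (2 * L) * (r \<bullet> r) = 1 / (2 * L) * (r \<bullet> r)"
    using Lp by (simp add: field_simps)
  ultimately show ?thesis using A B e1 e2 e3 unfolding r_def[symmetric]
    by (simp add: power2_norm_eq_inner)
qed

lemma lin_aux:
  fixes g p :: "'a::real_inner"
  shows "g \<bullet> v + 1 / (2 * c) * (p \<bullet> v + v \<bullet> p) = (g + (1 / c) *\<^sub>R p) \<bullet> v"
proof -
  have "p \<bullet> v + v \<bullet> p = 2 * (p \<bullet> v)" by (simp add: inner_commute)
  then show ?thesis by (simp add: inner_add_left)
qed

theorem lemma9:
  fixes G :: "real^'n \<Rightarrow> real"
    and F :: "real^'m \<Rightarrow> ereal"
    and K :: "real^'n^'m"
    and \<mu>x Lx \<eta>x \<eta>y \<beta>y \<theta> :: real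
    and xs :: "real^'n" and ys :: "real^'m"
    and x xhat w :: "nat \<Rightarrow> real^'n"
    and y ybar g :: "nat \<Rightarrow> real^'m"
    and \<Psi> :: "nat \<Rightarrow> real^'n \<Rightarrow> real"
    and k :: nat
  assumes G_diff: "\<And>z. G differentiable (at z)"
    and G_sc: "strongly_convex_grad \<mu>x G" and mu_pos: "\<mu>x > 0"
    and G_smooth: "smooth_grad Lx G" and L_pos: "Lx > 0"
    and F_proper: "proper_fun F" and F_closed: "closed_fun F" and F_convex: "convex_fun F"
    and sol1: "grad G xs + transpose K *v ys = 0"
    and sol2: "K *v xs \<in> subdiff (conjugate F) ys"
    and steps: "\<eta>x > 0" "\<eta>y > 0" "\<beta>y > 0" "0 \<le> \<theta>" "\<theta> \<le> 1"
    and ybar0: "ybar 0 = y 0"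
    and Psi_def: "\<And>j z. \<Psi> j z = G z + 1 / (2 * \<eta>x) *
                   (norm (z - (x j - \<eta>x *\<^sub>R (transpose K *v ybar j))))\<^sup>2"
    and w_min: "\<And>j z. \<Psi> j (w j) \<le> \<Psi> j z"
    and x_upd: "\<And>j. x (Suc j) = x j - \<eta>x *\<^sub>R (grad G (xhat j) + transpose K *v ybar j)"
    and y_upd: "\<And>j. y (Suc j) = y j - \<eta>y *\<^sub>R (g (Suc j) - K *v xhat j)
                   - (\<eta>y * \<beta>y) *\<^sub>R (K *v (transpose K *v y j + grad G (xhat j)))"
    and g_sub: "\<And>j. g (Suc j) \<in> subdiff (conjugate F) (y (Suc j))"
    and ybar_upd: "\<And>j. ybar (Suc j) = y (Suc j) + \<theta> *\<^sub>R (y (Suc j) - y j)"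
  shows "(1 + \<mu>x * \<eta>x / 2) * (1 / \<eta>x) * (norm (x (Suc k) - xs))\<^sup>2
     \<le> (1 / \<eta>x) * (norm (x k - xs))\<^sup>2
       + (2 * \<eta>x + \<mu>x * \<eta>x\<^sup>2) * (norm (grad (\<Psi> k) (xhat k)))\<^sup>2
       - (1 / (2 * \<eta>x)) * (norm (x k - w k))\<^sup>2
       - 2 * ((transpose K *v ybar k - transpose K *v ys) \<bullet> (xhat k - xs))
       - (1 / Lx) * (norm (grad G (xhat k) - grad G xs))\<^sup>2"
proof -
  let ?\<eta> = \<eta>x
  define a where "a = x k"
  define h where "h = xhat k"
  define b where "b = transpose K *v ybar k"
  define u where "u = a - \<eta>x *\<^sub>R b"
  define gh where "gh = grad G h"
  define gs where "gs = grad G xs"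
  define e where "e = grad (\<Psi> k) h"
  define q where "q = b - transpose K *v ys"
  have ep: "\<eta>x > 0" using steps by simp
  have Psik: "\<Psi> k = (\<lambda>z. G z + 1 / (2 * \<eta>x) * ((z - u) \<bullet> (z - u)))"
    by (rule ext) (simp add: Psi_def u_def a_def b_def power2_norm_eq_inner)
  have Psi_der: "(\<Psi> k has_derivative (\<lambda>v. (grad G z + (1 / \<eta>x) *\<^sub>R (z - u)) \<bullet> v)) (at z)" for z
  proof -
    have "(\<Psi> k has_derivative (\<lambda>v. grad G z \<bullet> v + 1 / (2 * \<eta>x) * ((z - u) \<bullet> v + v \<bullet> (z - u)))) (at z)"
      unfolding Psik
      by (rule derivative_eq_intros grad_works[OF G_diff] | simp)+
    moreover have "(\<lambda>v. grad G z \<bullet> v + 1 / (2 * \<eta>x) * ((z - u) \<bullet> v + v \<bullet> (z - u)))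
        = (\<lambda>v. (grad G z + (1 / \<eta>x) *\<^sub>R (z - u)) \<bullet> v)"
      by (rule ext) (rule lin_aux)
    ultimately show ?thesis by simp
  qed
  have gPsi: "grad (\<Psi> k) z = grad G z + (1 / \<eta>x) *\<^sub>R (z - u)" for z
    by (rule grad_unique[OF Psi_der])
  have xplus: "x (Suc k) = h - \<eta>x *\<^sub>R e"
    unfolding e_def gPsi using ep
    by (simp add: x_upd a_def b_def h_def u_def algebra_simps)
  have gw0: "grad (\<Psi> k) (w k) = 0"
  proof -
    have "(\<lambda>v. grad (\<Psi> k) (w k) \<bullet> v) = (\<lambda>v. 0)"
      using has_derivative_local_min[OF Psi_der[of "w k", folded gPsi]] w_min by simp
    then have "grad (\<Psi> k) (w k) \<bullet> grad (\<Psi> k) (w k) = 0" by metis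
    then show ?thesis by simp
  qed
  have cvx: "G p - G r - grad G r \<bullet> (p - r) \<ge> 0" for p r
  proof -
    have "G p - G r - grad G r \<bullet> (p - r) \<ge> \<mu>x / 2 * (norm (p - r))\<^sup>2"
      using G_sc unfolding strongly_convex_grad_def by blast
    moreover have "\<mu>x / 2 * (norm (p - r))\<^sup>2 \<ge> 0" using mu_pos by simp
    ultimately show ?thesis by linarith
  qed
  have HW: "(norm (h - w k))\<^sup>2 \<le> \<eta>x\<^sup>2 * (norm e)\<^sup>2"
  proof -
    have m: "(grad G h - grad G (w k)) \<bullet> (h - w k) \<ge> 0"
      using cvx[of h "w k"] cvx[of "w k" h] by (simp add: inner_diff_left inner_diff_right inner_commute)
    have "e = e - grad (\<Psi> k) (w k)" using gw0 by simp
    also have "\<dots> = (grad G h - grad G (w k)) + (1 / \<eta>x) *\<^sub>R (h - w k)"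
      unfolding e_def gPsi by (simp add: algebra_simps)
    finally have "e \<bullet> (h - w k) = (grad G h - grad G (w k)) \<bullet> (h - w k) + (1 / \<eta>x) * (norm (h - w k))\<^sup>2"
      by (simp add: inner_add_left power2_norm_eq_inner)
    with m have "(1 / \<eta>x) * (norm (h - w k))\<^sup>2 \<le> e \<bullet> (h - w k)" by linarith
    also have "\<dots> \<le> norm e * norm (h - w k)" by (rule norm_cauchy_schwarz)
    finally have "(1 / \<eta>x) * (norm (h - w k))\<^sup>2 \<le> norm e * norm (h - w k)" .
    then have "norm (h - w k) \<le> \<eta>x * norm e"
      using ep by (cases "norm (h - w k) = 0") (auto simp: power2_eq_square field_simps)
    then have "(norm (h - w k))\<^sup>2 \<le> (\<eta>x * norm e)\<^sup>2"
      by (simp add: power_mono)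
    then show ?thesis by (simp add: power_mult_distrib)
  qed
  have I6: "(gh - gs) \<bullet> (h - xs) \<ge> \<mu>x / 2 * (norm (h - xs))\<^sup>2 + 1 / (2 * Lx) * (norm (gh - gs))\<^sup>2"
  proof -
    have A: "G h \<ge> G xs + gs \<bullet> (h - xs) + 1 / (2 * Lx) * (norm (gh - gs))\<^sup>2"
      unfolding gh_def gs_def by (rule smooth_cvx[OF G_diff G_smooth L_pos cvx])
    have B: "G xs - G h - gh \<bullet> (xs - h) \<ge> \<mu>x / 2 * (norm (xs - h))\<^sup>2"
      using G_sc unfolding strongly_convex_grad_def gh_def by blast
    have B': "G xs - G h - gh \<bullet> (xs - h) \<ge> \<mu>x / 2 * (norm (h - xs))\<^sup>2"
      using B by (simp add: norm_minus_commute)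
    have "gh \<bullet> (xs - h) = - (gh \<bullet> (h - xs))" by (simp add: inner_diff_right)
    moreover have "(gh - gs) \<bullet> (h - xs) = gh \<bullet> (h - xs) - gs \<bullet> (h - xs)" by (simp add: inner_diff_left)
    ultimately show ?thesis using A B' by linarith
  qed
  have "transpose K *v ys = - gs" using sol1 unfolding gs_def
    by (metis add.commute eq_neg_iff_add_eq_0)
  then have qeq: "q = (gh + b) - (gh - gs)" unfolding q_def by simp
  have pe: "\<eta>x *\<^sub>R e = \<eta>x *\<^sub>R (gh + b) + (h - a)"
    unfolding e_def gPsi gh_def[symmetric] using ep by (simp add: u_def algebra_simps)
  have xp2: "x (Suc k) = a - \<eta>x *\<^sub>R (gh + b)"
    using x_upd[of k] unfolding a_def gh_def h_def b_def by simp
  have ident: "\<And>A H P :: real^'n. (norm (A - P))\<^sup>2 = (norm A)\<^sup>2 - 2 * (P \<bullet> H) - (norm (A - H))\<^sup>2 + (norm (P + H - A))\<^sup>2"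
    by (simp add: power2_norm_eq_inner inner_add_left inner_add_right inner_diff_left inner_diff_right inner_commute algebra_simps)
  have N7: "(norm (x (Suc k) - xs))\<^sup>2 = (norm (a - xs))\<^sup>2 - 2 * \<eta>x * ((gh - gs) \<bullet> (h - xs))
      - 2 * \<eta>x * (q \<bullet> (h - xs)) - (norm (a - h))\<^sup>2 + \<eta>x\<^sup>2 * (norm e)\<^sup>2"
  proof -
    have "(norm (x (Suc k) - xs))\<^sup>2 = (norm ((a - xs) - \<eta>x *\<^sub>R (gh + b)))\<^sup>2"
      unfolding xp2 by (simp add: algebra_simps)
    also have "\<dots> = (norm (a - xs))\<^sup>2 - 2 * ((\<eta>x *\<^sub>R (gh + b)) \<bullet> (h - xs)) - (norm ((a - xs) - (h - xs)))\<^sup>2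
        + (norm (\<eta>x *\<^sub>R (gh + b) + (h - xs) - (a - xs)))\<^sup>2" by (rule ident)
    also have "\<eta>x *\<^sub>R (gh + b) + (h - xs) - (a - xs) = \<eta>x *\<^sub>R e" using pe by simp
    also have "(a - xs) - (h - xs) = a - h" by simp
    also have "(\<eta>x *\<^sub>R (gh + b)) \<bullet> (h - xs) = \<eta>x * ((gh - gs) \<bullet> (h - xs)) + \<eta>x * (q \<bullet> (h - xs))"
      unfolding qeq by (simp add: inner_diff_left inner_add_left algebra_simps)
    also have "(norm (\<eta>x *\<^sub>R e))\<^sup>2 = \<eta>x\<^sup>2 * (norm e)\<^sup>2" using ep by (simp add: power_mult_distrib)
    finally show ?thesis by (simp add: algebra_simps)
  qed
  have par: "\<And>U V :: real^'n. (norm (U - V))\<^sup>2 \<le> 2 * (norm U)\<^sup>2 + 2 * (norm V)\<^sup>2"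
  proof -
    fix U V :: "real^'n"
    have "0 \<le> (norm (U + V))\<^sup>2" by simp
    then show "(norm (U - V))\<^sup>2 \<le> 2 * (norm U)\<^sup>2 + 2 * (norm V)\<^sup>2"
      by (simp add: power2_norm_eq_inner inner_add_left inner_add_right inner_diff_left inner_diff_right inner_commute algebra_simps)
  qed
  have N8: "(norm (x (Suc k) - xs))\<^sup>2 \<le> 2 * (norm (h - xs))\<^sup>2 + 2 * (\<eta>x\<^sup>2 * (norm e)\<^sup>2)"
  proof -
    have "x (Suc k) - xs = (h - xs) - \<eta>x *\<^sub>R e" unfolding xplus by simp
    then have "(norm (x (Suc k) - xs))\<^sup>2 \<le> 2 * (norm (h - xs))\<^sup>2 + 2 * (norm (\<eta>x *\<^sub>R e))\<^sup>2"
      using par by metis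
    then show ?thesis using ep by (simp add: power_mult_distrib)
  qed
  have N9: "(norm (a - w k))\<^sup>2 \<le> 2 * (norm (a - h))\<^sup>2 + 2 * (norm (h - w k))\<^sup>2"
    using par[of "a - h" "w k - h"] by (simp add: norm_minus_commute)
  define N1 where "N1 = (norm (x (Suc k) - xs))\<^sup>2"
  define N0 where "N0 = (norm (a - xs))\<^sup>2"
  define II where "II = (gh - gs) \<bullet> (h - xs)"
  define Q where "Q = q \<bullet> (h - xs)"
  define D where "D = (norm (a - h))\<^sup>2"
  define E where "E = (norm e)\<^sup>2"
  define Hs where "Hs = (norm (h - xs))\<^sup>2"
  define R where "R = (norm (gh - gs))\<^sup>2"
  define W where "W = (norm (a - w k))\<^sup>2"
  define HH where "HH = (norm (h - w k))\<^sup>2"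
  note defs = N1_def N0_def II_def Q_def D_def E_def Hs_def R_def W_def HH_def
  have f7: "N1 = N0 - 2 * \<eta>x * II - 2 * \<eta>x * Q - D + \<eta>x\<^sup>2 * E" using N7 unfolding defs .
  have f6: "\<eta>x * II \<ge> \<eta>x * (\<mu>x / 2 * Hs + 1 / (2 * Lx) * R)"
    using I6 ep unfolding defs by (simp add: mult_left_mono)
  have f8: "(\<mu>x * \<eta>x / 2) * N1 \<le> (\<mu>x * \<eta>x / 2) * (2 * Hs + 2 * (\<eta>x\<^sup>2 * E))"
    using N8 ep mu_pos unfolding defs by (intro mult_left_mono) auto
  have f9: "W \<le> 2 * D + 2 * HH" using N9 unfolding defs .
  have f5: "HH \<le> \<eta>x\<^sup>2 * E" using HW unfolding defs .
  have main: "(1 + \<mu>x * \<eta>x / 2) * N1 \<le> N0 + (2 * \<eta>x\<^sup>2 + \<mu>x * \<eta>x ^ 3) * E - W / 2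
      - 2 * \<eta>x * Q - \<eta>x / Lx * R"
  proof -
    have "(1 + \<mu>x * \<eta>x / 2) * N1 = N1 + \<mu>x * \<eta>x / 2 * N1" by (simp add: algebra_simps)
    also have "\<dots> \<le> N1 + \<mu>x * \<eta>x * Hs + \<mu>x * \<eta>x ^ 3 * E"
      using f8 by (simp add: algebra_simps power2_eq_square power3_eq_cube)
    also have "N1 \<le> N0 - 2 * \<eta>x * Q - D + \<eta>x\<^sup>2 * E - \<mu>x * \<eta>x * Hs - \<eta>x / Lx * R"
    proof -
      have "\<eta>x * (\<mu>x / 2 * Hs + 1 / (2 * Lx) * R) = (\<mu>x * \<eta>x * Hs + \<eta>x / Lx * R) / 2" by (simp add: field_simps)
      then show ?thesis using f7 f6 by (simp add: algebra_simps)
    qed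
    finally show ?thesis using f9 f5 by (simp add: algebra_simps)
  qed
  have "(1 + \<mu>x * \<eta>x / 2) * (1 / \<eta>x) * N1 = (1 / \<eta>x) * ((1 + \<mu>x * \<eta>x / 2) * N1)" by simp
  also have "\<dots> \<le> (1 / \<eta>x) * (N0 + (2 * \<eta>x\<^sup>2 + \<mu>x * \<eta>x ^ 3) * E - W / 2 - 2 * \<eta>x * Q - \<eta>x / Lx * R)"
    using main ep by (intro mult_left_mono) auto
  also have "\<dots> = (1 / \<eta>x) * N0 + (2 * \<eta>x + \<mu>x * \<eta>x\<^sup>2) * E - (1 / (2 * \<eta>x)) * W - 2 * Q - (1 / Lx) * R"
    using ep by (simp add: field_simps power2_eq_square power3_eq_cube)
  finally show ?thesis
    unfolding defs a_def h_def e_def q_def b_def gh_def gs_def .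
qed

end
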